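(* Let $M$ be a matroid on a finite set $E$ with rank function $r$ and closure operator $\mathrm{cl}$, and let $\mathcal{C}$ be a family of circuits of $M$. Let $X\subseteq E$ and let $(C_1,\dots,C_t)$ be a proper $\mathcal{C}$-sequence. Then $r(X)\le|X\cup C_{\le t}|-t$. Moreover, if equality holds, then $C_{\le t}\subseteq\mathrm{cl}(X)$ and every $e\in X\setminus C_{\le t}$ is a coloop of $M|_X$.
   Context: For a sequence of circuits $(C_1,\dots,C_t)$, write $C_{\le i}=\bigcup_{j\le i}C_j$ and $C_{\le0}=\emptyset$. The sequence is proper if $C_i\not\subseteq C_{\le i-1}$ for all $2\le i\le t$. It is a $\mathcal{C}$-sequence if every $C_i$ belongs to $\mathcal{C}$. *)

theory Defs
  imports Main
begin

definition matroid :: "'a set \<Rightarrow> ('a set \<Rightarrow> bool) \<Rightarrow> bool" where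
  "matroid E indep \<longleftrightarrow> finite E \<and> indep {} \<and>
     (\<forall>I. indep I \<longrightarrow> I \<subseteq> E) \<and>
     (\<forall>I J. indep J \<and> I \<subseteq> J \<longrightarrow> indep I) \<and>
     (\<forall>I J. indep I \<and> indep J \<and> card I < card J \<longrightarrow> (\<exists>e\<in>J - I. indep (insert e I)))"

definition rk :: "('a set \<Rightarrow> bool) \<Rightarrow> 'a set \<Rightarrow> nat" where
  "rk indep X = Max (card ` {I. I \<subseteq> X \<and> indep I})"

definition cl :: "'a set \<Rightarrow> ('a set \<Rightarrow> bool) \<Rightarrow> 'a set \<Rightarrow> 'a set" where
  "cl E indep X = {e \<in> E. rk indep (insert e X) = rk indep X}"

definition circuit :: "'a set \<Rightarrow> ('a set \<Rightarrow> bool) \<Rightarrow> 'a set \<Rightarrow> bool" where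
  "circuit E indep C \<longleftrightarrow> C \<subseteq> E \<and> \<not> indep C \<and> (\<forall>D. D \<subset> C \<longrightarrow> indep D)"

definition basis :: "'a set \<Rightarrow> ('a set \<Rightarrow> bool) \<Rightarrow> 'a set \<Rightarrow> bool" where
  "basis E indep B \<longleftrightarrow> indep B \<and> B \<subseteq> E \<and> (\<forall>I. indep I \<and> I \<subseteq> E \<and> B \<subseteq> I \<longrightarrow> I = B)"

definition coloop :: "'a set \<Rightarrow> ('a set \<Rightarrow> bool) \<Rightarrow> 'a \<Rightarrow> bool" where
  "coloop E indep e \<longleftrightarrow> e \<in> E \<and> (\<forall>B. basis E indep B \<longrightarrow> e \<in> B)"

text \<open>Restriction M|X: ground set X, independent sets those of M contained in X.\<close>
definition restr_indep :: "('a set \<Rightarrow> bool) \<Rightarrow> 'a set \<Rightarrow> 'a set \<Rightarrow> bool" where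
  "restr_indep indep X I \<longleftrightarrow> indep I \<and> I \<subseteq> X"

text \<open>Sequences (C_1,...,C_t) are lists; C_{\<le>i} is the union of the first i entries.\<close>
definition upto_union :: "'a set list \<Rightarrow> nat \<Rightarrow> 'a set" where
  "upto_union Cs i = \<Union> (set (take i Cs))"

text \<open>Proper: C_i not contained in C_{\<le>i-1} for 2 \<le> i \<le> t (0-based: 1 \<le> i < t).\<close>
definition proper_seq :: "'a set list \<Rightarrow> bool" where
  "proper_seq Cs \<longleftrightarrow> (\<forall>i. 1 \<le> i \<and> i < length Cs \<longrightarrow> \<not> (Cs ! i \<subseteq> upto_union Cs i))"

definition family_seq :: "'a set set \<Rightarrow> 'a set list \<Rightarrow> bool" where
  "family_seq \<C> Cs \<longleftrightarrow> set Cs \<subseteq> \<C>"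

end

theory Submission
  imports Defs
begin

lemma m_sub: "matroid E indep \<Longrightarrow> indep I \<Longrightarrow> I \<subseteq> E"
  unfolding matroid_def by blast

lemma m_fin: "matroid E indep \<Longrightarrow> finite E"
  unfolding matroid_def by blast

lemma m_down: "matroid E indep \<Longrightarrow> indep J \<Longrightarrow> I \<subseteq> J \<Longrightarrow> indep I"
  unfolding matroid_def by blast

lemma m_aug: "matroid E indep \<Longrightarrow> indep I \<Longrightarrow> indep J \<Longrightarrow> card I < card J \<Longrightarrow> \<exists>e\<in>J - I. indep (insert e I)"
  unfolding matroid_def by blast

lemma m_empty: "matroid E indep \<Longrightarrow> indep {}"
  unfolding matroid_def by blast

lemma rk_fin:
  assumes "matroid E indep"
  shows "finite (card ` {I. I \<subseteq> X \<and> indep I})" "card ` {I. I \<subseteq> X \<and> indep I} \<noteq> {}"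
proof -
  have "{I. I \<subseteq> X \<and> indep I} \<subseteq> Pow E" using m_sub[OF assms] by blast
  then show "finite (card ` {I. I \<subseteq> X \<and> indep I})"
    using m_fin[OF assms] by (meson finite_Pow_iff finite_imageI finite_subset)
  show "card ` {I. I \<subseteq> X \<and> indep I} \<noteq> {}" using m_empty[OF assms] by blast
qed

lemma rk_ge:
  assumes "matroid E indep" "I \<subseteq> X" "indep I"
  shows "card I \<le> rk indep X"
proof -
  have "card I \<in> card ` {I. I \<subseteq> X \<and> indep I}" using assms(2,3) by blast
  then show ?thesis unfolding rk_def by (rule Max_ge[OF rk_fin(1)[OF assms(1)]])
qed

lemma rk_ex:
  assumes "matroid E indep"
  obtains I where "I \<subseteq> X" "indep I" "card I = rk indep X"
proof -
  have "rk indep X \<in> card ` {I. I \<subseteq> X \<and> indep I}"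
    unfolding rk_def using rk_fin[OF assms(1)] by (rule Max_in)
  then obtain I where h: "I \<in> {I. I \<subseteq> X \<and> indep I}" "rk indep X = card I" by (rule imageE)
  show ?thesis
  proof (rule that[of I])
    show "I \<subseteq> X" "indep I" using h(1) by auto
    show "card I = rk indep X" using h(2) by (rule sym)
  qed
qed

lemma rk_mono:
  assumes "matroid E indep" "X \<subseteq> Y"
  shows "rk indep X \<le> rk indep Y"
proof -
  obtain I where "I \<subseteq> X" "indep I" "card I = rk indep X" using rk_ex[OF assms(1)] by blast
  moreover have "I \<subseteq> Y" using \<open>I \<subseteq> X\<close> assms(2) by (rule subset_trans)
  ultimately show ?thesis using rk_ge[OF assms(1), of I Y] by simp
qed

lemma rk_card:
  assumes "matroid E indep" "finite X"
  shows "rk indep X \<le> card X"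
proof -
  obtain I where "I \<subseteq> X" "indep I" "card I = rk indep X" using rk_ex[OF assms(1)] by blast
  then have "card I \<le> card X" using card_mono[OF assms(2) \<open>I \<subseteq> X\<close>] by simp
  then show ?thesis using \<open>card I = rk indep X\<close> by simp
qed

lemma rk_diff:
  assumes "matroid E indep" "A \<subseteq> B" "finite B"
  shows "rk indep B \<le> rk indep A + card (B - A)"
proof -
  obtain I where I: "I \<subseteq> B" "indep I" "card I = rk indep B" using rk_ex[OF assms(1)] by blast
  have fI: "finite I" using I assms(3) finite_subset by blast
  have "I = (I \<inter> A) \<union> (I - A)" by blast
  then have "card I \<le> card (I \<inter> A) + card (I - A)" by (metis card_Un_le)
  moreover have "card (I \<inter> A) \<le> rk indep A"
    using rk_ge[OF assms(1), of "I \<inter> A" A] m_down[OF assms(1) I(2), of "I \<inter> A"] by auto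
  moreover have "card (I - A) \<le> card (B - A)" using I(1) assms(3) by (intro card_mono) auto
  ultimately show ?thesis using I by linarith
qed

lemma rk_circ:
  assumes m: "matroid E indep" and c: "circuit E indep C" and e: "e \<in> C" and cb: "C \<subseteq> B" and fb: "finite B"
  shows "rk indep B \<le> rk indep (B - {e})"
proof -
  let ?S = "{J. C - {e} \<subseteq> J \<and> J \<subseteq> B - {e} \<and> indep J}"
  have ci: "indep (C - {e})" using c e unfolding circuit_def by blast
  have "C - {e} \<in> ?S" using ci cb by blast
  moreover have "\<forall>K. K \<in> ?S \<longrightarrow> card K < Suc (card B)"
  proof (intro allI impI)
    fix K assume "K \<in> ?S"
    then have "K \<subseteq> B" by blast
    then show "card K < Suc (card B)" using card_mono[OF fb] by (simp add: le_imp_less_Suc)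
  qed
  ultimately obtain J where J: "J \<in> ?S" "\<And>K. K \<in> ?S \<Longrightarrow> card K \<le> card J"
    using ex_has_greatest_nat[of "\<lambda>J. J \<in> ?S" "C - {e}" card "Suc (card B)"] by blast
  obtain I where I: "I \<subseteq> B" "indep I" "card I = rk indep B" using rk_ex[OF m] by blast
  have "card I \<le> card J"
  proof (rule ccontr)
    assume "\<not> ?thesis"
    then obtain f where f: "f \<in> I - J" "indep (insert f J)" using m_aug[OF m, of J I] J(1) I by force
    show False
    proof (cases "f = e")
      case True
      then have "C \<subseteq> insert f J" using J(1) by blast
      then have "indep C" using m_down[OF m f(2)] by blast
      then show False using c unfolding circuit_def by blast
    next
      case False
      then have "insert f J \<in> ?S" using J(1) f I(1) by blast
      then have "card (insert f J) \<le> card J" by (rule J(2))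
      moreover have "finite J" using J(1) fb finite_subset by blast
      ultimately show False using f(1) by simp
    qed
  qed
  moreover have "card J \<le> rk indep (B - {e})" using J(1) rk_ge[OF m, of J "B - {e}"] by blast
  ultimately show ?thesis using I by linarith
qed

lemma uu_Suc: "i < length Cs \<Longrightarrow> upto_union Cs (Suc i) = upto_union Cs i \<union> Cs ! i"
  unfolding upto_union_def by (auto simp add: take_Suc_conv_app_nth)

lemma uu_sub: "\<forall>C\<in>\<C>. circuit E indep C \<Longrightarrow> family_seq \<C> Cs \<Longrightarrow> upto_union Cs i \<subseteq> E"
  unfolding upto_union_def family_seq_def circuit_def by (auto dest!: in_set_takeD)

lemma nullity:
  assumes m: "matroid E indep" and c: "\<forall>C\<in>\<C>. circuit E indep C"
    and p: "proper_seq Cs" and f: "family_seq \<C> Cs"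
  shows "i \<le> length Cs \<Longrightarrow> int i \<le> int (card (upto_union Cs i)) - int (rk indep (upto_union Cs i))"
proof (induction i)
  case 0
  then show ?case using rk_card[OF m, of "{}"] by (simp add: upto_union_def)
next
  case (Suc i)
  let ?A = "upto_union Cs i" and ?B = "upto_union Cs (Suc i)" and ?C = "Cs ! i"
  have il: "i < length Cs" using Suc by simp
  have B: "?B = ?A \<union> ?C" using uu_Suc[OF il] .
  have "?C \<in> \<C>" using f nth_mem[OF il] unfolding family_seq_def by blast
  then have cc: "circuit E indep ?C" using c by blast
  have fB: "finite ?B" using finite_subset[OF uu_sub[OF c f] m_fin[OF m]] .
  obtain e where e: "e \<in> ?C" "e \<notin> ?A"
  proof (cases "i = 0")
    case True
    have "\<not> indep ?C" using cc unfolding circuit_def by simp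
    then have "?C \<noteq> {}" using m_empty[OF m] by metis
    then obtain x where "x \<in> ?C" by (meson ex_in_conv)
    moreover have "?A = {}" using True by (simp add: upto_union_def)
    ultimately show ?thesis using that by blast
  next
    case False
    then have "\<not> ?C \<subseteq> ?A" using il p unfolding proper_seq_def by simp
    then show ?thesis using that by blast
  qed
  have eB: "e \<in> ?B" using B e by blast
  have cB: "?C \<subseteq> ?B" using B by blast
  have r1: "rk indep ?B \<le> rk indep (?B - {e})" using rk_circ[OF m cc e(1) cB fB] .
  have s0: "?A \<subseteq> ?B - {e}" using B e by blast
  have fB0: "finite (?B - {e})" using fB by simp
  have r2: "rk indep (?B - {e}) \<le> rk indep ?A + card (?B - {e} - ?A)"
    using rk_diff[OF m s0 fB0] .
  have c1: "card ?B = Suc (card (?B - {e}))" using card_Suc_Diff1[OF fB eB] by simp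
  have c2: "card (?B - {e}) = card ?A + card (?B - {e} - ?A)"
  proof -
    have s: "?A \<subseteq> ?B - {e}" using B e by blast
    have fB': "finite (?B - {e})" using fB by simp
    have "?B - {e} = ?A \<union> (?B - {e} - ?A)" using s by blast
    moreover have "card (?A \<union> (?B - {e} - ?A)) = card ?A + card (?B - {e} - ?A)"
      using fB' s by (intro card_Un_disjoint) (auto intro: finite_subset)
    ultimately show ?thesis by simp
  qed
  show ?case using Suc.IH il r1 r2 c1 c2 by linarith
qed

lemma basis_card:
  assumes m: "matroid E indep" and b: "basis X (restr_indep indep X) B"
  shows "rk indep X \<le> card B"
proof (rule ccontr)
  assume "\<not> ?thesis"
  obtain I where I: "I \<subseteq> X" "indep I" "card I = rk indep X" using rk_ex[OF m] by blast
  have bi: "indep B" "B \<subseteq> X" using b unfolding basis_def restr_indep_def by auto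
  obtain f where f: "f \<in> I - B" "indep (insert f B)" using m_aug[OF m bi(1) I(2)] I \<open>\<not> _\<close> by force
  have "insert f B = B" using b f I(1) unfolding basis_def restr_indep_def by blast
  then show False using f by blast
qed

theorem lemma3p2:
  fixes E :: "'a set" and indep :: "'a set \<Rightarrow> bool"
    and \<C> :: "'a set set" and X :: "'a set" and Cs :: "'a set list"
  assumes "matroid E indep"
    and "\<forall>C\<in>\<C>. circuit E indep C"
    and "X \<subseteq> E"
    and "proper_seq Cs" and "family_seq \<C> Cs"
  shows "int (rk indep X) \<le> int (card (X \<union> upto_union Cs (length Cs))) - int (length Cs) \<and>
         (int (rk indep X) = int (card (X \<union> upto_union Cs (length Cs))) - int (length Cs) \<longrightarrow>
           upto_union Cs (length Cs) \<subseteq> cl E indep X \<and>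
           (\<forall>e \<in> X - upto_union Cs (length Cs). coloop X (restr_indep indep X) e))"
proof -
  note m = assms(1)
  let ?U = "upto_union Cs (length Cs)"
  let ?Z = "X \<union> ?U"
  have UE: "?U \<subseteq> E" using uu_sub[OF assms(2) assms(5)] .
  have fZ: "finite ?Z" using UE assms(3) m_fin[OF m] finite_subset by blast
  have fU: "finite ?U" using UE m_fin[OF m] finite_subset by blast
  have nU: "int (length Cs) \<le> int (card ?U) - int (rk indep ?U)"
    using nullity[OF m assms(2,4,5)] by simp
  have nmono: "int (card A) - int (rk indep A) \<le> int (card B) - int (rk indep B)"
    if "A \<subseteq> B" "finite B" for A B
  proof -
    have "rk indep B \<le> rk indep A + card (B - A)" using rk_diff[OF m that] .
    moreover have "card B = card A + card (B - A)"
    proof -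
      have "B = A \<union> (B - A)" using that by blast
      moreover have "card (A \<union> (B - A)) = card A + card (B - A)"
        using that by (intro card_Un_disjoint) (auto intro: finite_subset)
      ultimately show ?thesis by simp
    qed
    ultimately show ?thesis by linarith
  qed
  have nZ: "int (length Cs) \<le> int (card ?Z) - int (rk indep ?Z)"
    using nU nmono[of ?U ?Z] fZ by force
  have rXZ: "rk indep X \<le> rk indep ?Z" using rk_mono[OF m Un_upper1] .
  have part1: "int (rk indep X) \<le> int (card ?Z) - int (length Cs)" using nZ rXZ by linarith
  moreover have "upto_union Cs (length Cs) \<subseteq> cl E indep X \<and>
           (\<forall>e \<in> X - upto_union Cs (length Cs). coloop X (restr_indep indep X) e)"
    if eq: "int (rk indep X) = int (card ?Z) - int (length Cs)"
  proof
    have rz: "rk indep ?Z = rk indep X" using eq nZ rXZ by linarith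
    show "?U \<subseteq> cl E indep X"
    proof
      fix e assume e: "e \<in> ?U"
      have "rk indep (insert e X) \<le> rk indep ?Z" using rk_mono[OF m, of "insert e X" ?Z] e by simp
      moreover have "rk indep X \<le> rk indep (insert e X)" using rk_mono[OF m subset_insertI] .
      ultimately show "e \<in> cl E indep X" using rz e UE unfolding cl_def by auto
    qed
    show "\<forall>e \<in> X - ?U. coloop X (restr_indep indep X) e"
    proof (intro ballI)
      fix e assume e: "e \<in> X - ?U"
      show "coloop X (restr_indep indep X) e"
        unfolding coloop_def
      proof (intro conjI allI impI)
        show "e \<in> X" using e by blast
        fix B assume b: "basis X (restr_indep indep X) B"
        show "e \<in> B"
        proof (rule ccontr)
          assume ne: "e \<notin> B"
          have bi: "indep B" "B \<subseteq> X" using b unfolding basis_def restr_indep_def by auto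
          have "card B \<le> rk indep (?Z - {e})" using rk_ge[OF m, of B "?Z - {e}"] bi ne by blast
          then have r1: "rk indep X \<le> rk indep (?Z - {e})" using basis_card[OF m b] by linarith
          have n2: "int (length Cs) \<le> int (card (?Z - {e})) - int (rk indep (?Z - {e}))"
            using nU nmono[of ?U "?Z - {e}"] fZ e by force
          have "e \<in> ?Z" using e by blast
          then have "card ?Z = Suc (card (?Z - {e}))" using card_Suc_Diff1[OF fZ] by metis
          then show False using r1 n2 eq by linarith
        qed
      qed
    qed
  qed
  ultimately show ?thesis by blast
qed

end
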